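(* Let $n\geq1$, $J=\{[1,2],[3,4],\ldots,[2n-1,2n]\}$, and $A\in{\cal M}_{2n}$. Let $C_1,\ldots,C_t$ be the connected components of the spanning subgraph of $K_{2n}$ with edge set $J\cup A$, with $C_t$ containing the edge $[2n-1,2n]$. Let $2\mu_i$ be the number of vertices of $C_i$, so that $\{2\mu_1,\ldots,2\mu_t\}$ is the multiset of parts of $d(J,A)$. (i) Let $s$ be a vertex of $C_j$ for some $j\in\{1,\ldots,t-1\}$, and put $A'=(s,2n-1)\cdot A$. Then the multiset of parts of $d(A',J)$ is $(\{2\mu_1,\ldots,2\mu_t\}\setminus\{2\mu_j,2\mu_t\})\cup\{2(\mu_j+\mu_t)\}$, and $2(\mu_j+\mu_t)$ is the number of vertices of the component of $A'\cup J$ containing $[2n-1,2n]$. (ii) Traverse the vertices of the alternating cycle $C_t$ in cyclic order, starting at $2n$ and going next to $2n-1$, and list them as $2n,2n-1,i_1,i_2,\ldots,i_{2k-1},i_{2k}$, where $k\geq0$ and $2\mu_t=2k+2$. Let $j\in\{1,\ldots,k\}$. (a) If $A'=(i_{2j},2n-1)\cdot A$, then the multiset of parts of $d(A',J)$ is $\{2\mu_1,\ldots,2\mu_{t-1},2\mu_t-2j,2j\}$, and $2\mu_t-2j$ is the number of vertices of the component of $A'\cup J$ containing $[2n-1,2n]$. (b) If $A'=(i_{2j-1},2n-1)\cdot A$, then the multiset of parts of $d(A',J)$ is $\{2\mu_1,\ldots,2\mu_t\}$, and $2\mu_t$ is the number of vertices of the component of $A'\cup J$ containing $[2n-1,2n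]$.
   Context: $K_{2n}$ is the complete graph on $\{1,\ldots,2n\}$, $[i,j]$ denotes the edge joining $i$ and $j$, and ${\cal M}_{2n}$ is the set of perfect matchings of $K_{2n}$. For $A,B\in{\cal M}_{2n}$, $d(A,B)$ is the partition of $2n$ whose parts are the numbers of vertices of the connected components of the spanning subgraph with edge set $A\cup B$. The components of $J\cup A$ are alternating cycles, or single edges common to $J$ and $A$. A permutation $\sigma\in S_{2n}$ acts on matchings by relabelling vertices: $\sigma\cdot A=\{[\sigma(a),\sigma(b)]:[a,b]\in A\}$. $(s,2n-1)$ denotes the transposition of $s$ and $2n-1$. *)

theory Defs
  imports Main "HOL-Library.Multiset" "HOL-Combinatorics.Transposition"
begin

definition verts :: "nat \<Rightarrow> nat set" where
  "verts n = {1..2*n}"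

text \<open>Edges [i,j] of K_{2n} are 2-element sets {i,j}.\<close>
definition edges_K :: "nat \<Rightarrow> nat set set" where
  "edges_K n = {{a, b} | a b. a \<noteq> b \<and> a \<in> verts n \<and> b \<in> verts n}"

definition perfect_matchings :: "nat \<Rightarrow> nat set set set" where
  "perfect_matchings n = {M. M \<subseteq> edges_K n \<and> (\<forall>v \<in> verts n. \<exists>!e. e \<in> M \<and> v \<in> e)}"

definition Jm :: "nat \<Rightarrow> nat set set" where
  "Jm n = {{2*i - 1, 2*i} | i. 1 \<le> i \<and> i \<le> n}"

definition act :: "(nat \<Rightarrow> nat) \<Rightarrow> nat set set \<Rightarrow> nat set set" where
  "act \<sigma> A = (\<lambda>e. \<sigma> ` e) ` A"

definition adj :: "nat set set \<Rightarrow> (nat \<times> nat) set" where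
  "adj E = {(u, v). {u, v} \<in> E}"

definition comp :: "nat set set \<Rightarrow> nat \<Rightarrow> nat set" where
  "comp E v = {w. (v, w) \<in> (adj E)\<^sup>*}"

definition components :: "nat \<Rightarrow> nat set set \<Rightarrow> nat set set" where
  "components n E = comp E ` verts n"

definition dist :: "nat \<Rightarrow> nat set set \<Rightarrow> nat set set \<Rightarrow> nat multiset" where
  "dist n A B = image_mset card (mset_set (components n (A \<union> B)))"

end

theory Submission
  imports Defs
begin


definition pm :: "nat set set \<Rightarrow> nat \<Rightarrow> nat" where
  "pm M v = (THE w. {v,w} \<in> M)"

definition st :: "nat set \<Rightarrow> (nat \<Rightarrow> nat) \<Rightarrow> (nat \<Rightarrow> nat) \<Rightarrow> (nat \<times> nat) set" where
  "st V f g = {(u,w). u \<in> V \<and> (w = f u \<or> w = g u)}"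

lemma pm_basic:
  assumes M: "M \<in> perfect_matchings n" and v: "v \<in> verts n"
  shows "({v,w} \<in> M \<longleftrightarrow> w = pm M v) \<and> pm M v \<in> verts n \<and> pm M v \<noteq> v"
proof -
  from M v obtain e where e: "e \<in> M" "v \<in> e" and uq: "\<And>e'. e' \<in> M \<Longrightarrow> v \<in> e' \<Longrightarrow> e' = e"
    unfolding perfect_matchings_def by blast
  from M e have "e \<in> edges_K n" unfolding perfect_matchings_def by blast
  then obtain a b where ab: "e = {a,b}" "a \<noteq> b" "a \<in> verts n" "b \<in> verts n" unfolding edges_K_def by blast
  obtain w0 where w0: "e = {v,w0}" "w0 \<noteq> v" "w0 \<in> verts n" using ab e(2) by blast
  have iff: "{v,w} \<in> M \<longleftrightarrow> w = w0" for w
  proof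
    assume "{v,w} \<in> M" then have "{v,w} = e" using uq by blast
    then show "w = w0" using w0 by (auto simp: doubleton_eq_iff)
  next
    assume "w = w0" then show "{v,w} \<in> M" using w0 e by simp
  qed
  have "pm M v = w0" unfolding pm_def using iff by blast
  then show ?thesis using iff w0 by simp
qed

lemma pm_char: "M \<in> perfect_matchings n \<Longrightarrow> v \<in> verts n \<Longrightarrow> {v,w} \<in> M \<longleftrightarrow> w = pm M v"
  using pm_basic by blast
lemma pm_in: "M \<in> perfect_matchings n \<Longrightarrow> v \<in> verts n \<Longrightarrow> pm M v \<in> verts n"
  using pm_basic by blast
lemma pm_neq: "M \<in> perfect_matchings n \<Longrightarrow> v \<in> verts n \<Longrightarrow> pm M v \<noteq> v"
  using pm_basic by blast
lemma pm_edge: "M \<in> perfect_matchings n \<Longrightarrow> v \<in> verts n \<Longrightarrow> {v, pm M v} \<in> M"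
  using pm_basic by blast
lemma pm_pm: assumes "M \<in> perfect_matchings n" "v \<in> verts n" shows "pm M (pm M v) = v"
proof -
  have "{pm M v, v} \<in> M" using pm_edge[OF assms] by (simp add: insert_commute)
  then show ?thesis using pm_char[OF assms(1) pm_in[OF assms]] by simp
qed
lemma edge_verts: "M \<in> perfect_matchings n \<Longrightarrow> {u,w} \<in> M \<Longrightarrow> u \<in> verts n"
  unfolding perfect_matchings_def edges_K_def by (auto simp: doubleton_eq_iff)

lemma adj_eq:
  assumes J: "J \<in> perfect_matchings n" and M: "M \<in> perfect_matchings n"
  shows "adj (J \<union> M) = st (verts n) (pm J) (pm M)"
proof -
  have "(u,w) \<in> adj (J \<union> M) \<longleftrightarrow> (u,w) \<in> st (verts n) (pm J) (pm M)" for u w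
  proof
    assume "(u,w) \<in> adj (J \<union> M)"
    then have "{u,w} \<in> J \<or> {u,w} \<in> M" unfolding adj_def by auto
    then show "(u,w) \<in> st (verts n) (pm J) (pm M)" unfolding st_def
      using edge_verts[OF J] edge_verts[OF M] pm_char[OF J] pm_char[OF M] by blast
  next
    assume "(u,w) \<in> st (verts n) (pm J) (pm M)"
    then show "(u,w) \<in> adj (J \<union> M)" unfolding st_def adj_def
      using pm_edge[OF J] pm_edge[OF M] by auto
  qed
  then show ?thesis by auto
qed

lemma Jm_pm: "Jm n \<in> perfect_matchings n"
proof -
  have sub: "Jm n \<subseteq> edges_K n"
  proof
    fix e assume "e \<in> Jm n"
    then obtain i where i: "e = {2*i-1, 2*i}" "1 \<le> i" "i \<le> n" unfolding Jm_def by blast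
    then show "e \<in> edges_K n" unfolding edges_K_def verts_def
      by (rule_tac CollectI, rule_tac x="2*i-1" in exI, rule_tac x="2*i" in exI, auto)
  qed
  have "\<exists>!e. e \<in> Jm n \<and> v \<in> e" if v: "v \<in> verts n" for v
  proof
    let ?i = "(v+1) div 2"
    show "{2*?i-1, 2*?i} \<in> Jm n \<and> v \<in> {2*?i-1, 2*?i}"
      using v unfolding Jm_def verts_def by auto
  next
    fix e assume "e \<in> Jm n \<and> v \<in> e"
    then obtain i where i: "e = {2*i-1, 2*i}" "1 \<le> i" "v \<in> e" unfolding Jm_def by blast
    then have "i = (v+1) div 2" by auto
    then show "e = {2*((v+1) div 2)-1, 2*((v+1) div 2)}" using i by simp
  qed
  then show ?thesis using sub unfolding perfect_matchings_def by blast
qed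


lemma transpose_verts: "x \<in> verts n \<Longrightarrow> t \<in> verts n \<Longrightarrow> u \<in> verts n \<Longrightarrow> transpose x t u \<in> verts n"
  by (auto simp: transpose_def)

lemma act_pm:
  assumes A: "A \<in> perfect_matchings n" and x: "x \<in> verts n" and t: "t \<in> verts n"
  defines "\<sigma> \<equiv> transpose x t"
  shows "act \<sigma> A \<in> perfect_matchings n \<and> (\<forall>u\<in>verts n. pm (act \<sigma> A) u = \<sigma> (pm A (\<sigma> u)))"
proof -
  have sv: "\<And>u. u \<in> verts n \<Longrightarrow> \<sigma> u \<in> verts n" unfolding \<sigma>_def using transpose_verts x t by blast
  have ss: "\<And>u. \<sigma> (\<sigma> u) = u" unfolding \<sigma>_def by simp
  have img: "\<And>a b. \<sigma> ` {a,b} = {\<sigma> a, \<sigma> b}" by simp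
  have inj: "\<And>a b. \<sigma> a = \<sigma> b \<Longrightarrow> a = b" using ss by metis
  have sub: "act \<sigma> A \<subseteq> edges_K n"
  proof
    fix e' assume "e' \<in> act \<sigma> A"
    then obtain e where e: "e \<in> A" "e' = \<sigma> ` e" unfolding act_def by blast
    then have "e \<in> edges_K n" using A unfolding perfect_matchings_def by blast
    then obtain a b where ab: "e = {a,b}" "a \<noteq> b" "a \<in> verts n" "b \<in> verts n" unfolding edges_K_def by blast
    then have "e' = {\<sigma> a, \<sigma> b}" "\<sigma> a \<noteq> \<sigma> b" "\<sigma> a \<in> verts n" "\<sigma> b \<in> verts n"
      using e sv inj by auto
    then show "e' \<in> edges_K n" unfolding edges_K_def by blast
  qed
  have uq: "\<exists>!e. e \<in> act \<sigma> A \<and> v \<in> e" if v: "v \<in> verts n" for v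
  proof
    let ?e0 = "{\<sigma> v, pm A (\<sigma> v)}"
    have "?e0 \<in> A" using pm_edge[OF A sv[OF v]] .
    then have "\<sigma> ` ?e0 \<in> act \<sigma> A" unfolding act_def by (rule imageI)
    moreover have "v \<in> \<sigma> ` ?e0" using ss by (metis imageI insertI1)
    ultimately show "\<sigma> ` ?e0 \<in> act \<sigma> A \<and> v \<in> \<sigma> ` ?e0" by blast
  next
    fix e' assume "e' \<in> act \<sigma> A \<and> v \<in> e'"
    then obtain e1 where e1: "e1 \<in> A" "e' = \<sigma> ` e1" "v \<in> \<sigma> ` e1" unfolding act_def by blast
    then have "\<sigma> v \<in> e1" using ss by auto
    moreover have "e1 \<in> edges_K n" using A e1 unfolding perfect_matchings_def by blast
    ultimately obtain w where w: "e1 = {\<sigma> v, w}" unfolding edges_K_def by blast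
    then have "w = pm A (\<sigma> v)" using pm_char[OF A sv[OF v]] e1 by simp
    then show "e' = \<sigma> ` {\<sigma> v, pm A (\<sigma> v)}" using e1 w by simp
  qed
  have P: "act \<sigma> A \<in> perfect_matchings n" unfolding perfect_matchings_def using sub uq by blast
  have "pm (act \<sigma> A) u = \<sigma> (pm A (\<sigma> u))" if u: "u \<in> verts n" for u
  proof -
    have "{\<sigma> u, pm A (\<sigma> u)} \<in> A" using pm_edge[OF A sv[OF u]] .
    then have "\<sigma> ` {\<sigma> u, pm A (\<sigma> u)} \<in> act \<sigma> A" unfolding act_def by blast
    then have "{u, \<sigma> (pm A (\<sigma> u))} \<in> act \<sigma> A" using ss by simp
    then show ?thesis using pm_char[OF P u] by simp
  qed
  then show ?thesis using P by blast
qed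

lemma reach_closed:
  assumes "v \<in> T" "\<And>u w. u \<in> T \<Longrightarrow> (u,w) \<in> R \<Longrightarrow> w \<in> T"
  shows "{w. (v,w) \<in> R\<^sup>*} \<subseteq> T"
proof
  fix w assume "w \<in> {w. (v,w) \<in> R\<^sup>*}"
  then have "(v,w) \<in> R\<^sup>*" by simp
  then show "w \<in> T" by (induction rule: rtrancl_induct) (use assms in auto)
qed

lemma reach_mono_in:
  assumes "(v,w) \<in> R\<^sup>*" "v \<in> T" "\<And>u w. u \<in> T \<Longrightarrow> (u,w) \<in> R \<Longrightarrow> w \<in> T \<and> (u,w) \<in> R'"
  shows "(v,w) \<in> R'\<^sup>*"
proof -
  from assms(1) have "(v,w) \<in> R'\<^sup>* \<and> w \<in> T"
  proof (induction rule: rtrancl_induct)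
    case base then show ?case using assms(2) by simp
  next
    case (step y z) then show ?case using assms(3) by (meson rtrancl.rtrancl_into_rtrancl)
  qed
  then show ?thesis by simp
qed

lemma reach_same:
  assumes "v \<in> T" "\<And>u w. u \<in> T \<Longrightarrow> (u,w) \<in> R \<longleftrightarrow> (u,w) \<in> R'"
    "\<And>u w. u \<in> T \<Longrightarrow> (u,w) \<in> R \<Longrightarrow> w \<in> T"
  shows "{w. (v,w) \<in> R\<^sup>*} = {w. (v,w) \<in> R'\<^sup>*}"
proof -
  have 1: "(v,w) \<in> R\<^sup>* \<Longrightarrow> (v,w) \<in> R'\<^sup>*" for w using reach_mono_in[of v w R T R'] assms by blast
  have 2: "(v,w) \<in> R'\<^sup>* \<Longrightarrow> (v,w) \<in> R\<^sup>*" for w using reach_mono_in[of v w R' T R] assms by blast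
  show ?thesis using 1 2 by blast
qed

lemma adj_sym: "(u,w) \<in> adj E \<Longrightarrow> (w,u) \<in> adj E"
  unfolding adj_def by (auto simp: insert_commute)

lemma adj_rtr_sym: "(u,w) \<in> (adj E)\<^sup>* \<Longrightarrow> (w,u) \<in> (adj E)\<^sup>*"
proof (induction rule: rtrancl_induct)
  case base then show ?case by simp
next
  case (step y z) then show ?case using adj_sym by (meson converse_rtrancl_into_rtrancl)
qed

lemma comp_self: "v \<in> comp E v" unfolding comp_def by simp

lemma comp_eq: "w \<in> comp E v \<Longrightarrow> comp E w = comp E v"
proof -
  assume "w \<in> comp E v"
  then have vw: "(v,w) \<in> (adj E)\<^sup>*" unfolding comp_def by simp
  then have wv: "(w,v) \<in> (adj E)\<^sup>*" by (rule adj_rtr_sym)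
  show ?thesis unfolding comp_def using rtrancl_trans[OF vw] rtrancl_trans[OF wv] by blast
qed

lemma comp_step: "(u,w) \<in> adj E \<Longrightarrow> u \<in> comp E v \<Longrightarrow> w \<in> comp E v"
  unfolding comp_def by (simp add: rtrancl.rtrancl_into_rtrancl)

lemma even_inv:
  assumes "finite Y" "\<And>y. y \<in> Y \<Longrightarrow> f y \<in> Y \<and> f y \<noteq> y \<and> f (f y) = y"
  shows "even (card Y)"
  using assms
proof (induction "card Y" arbitrary: Y rule: less_induct)
  case less
  show ?case
  proof (cases "Y = {}")
    case True then show ?thesis by simp
  next
    case False
    then obtain y where y: "y \<in> Y" by blast
    let ?Y = "Y - {y, f y}"
    have fy: "f y \<in> Y" "f y \<noteq> y" using less.prems y by auto
    have c: "card ?Y = card Y - 2" using less.prems(1) y fy by (simp add: card_Diff_subset)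
    have "card Y \<ge> 2" using less.prems(1) y fy
      by (metis card_2_iff card_mono empty_subsetI insert_subset)
    then have lt: "card ?Y < card Y" using c by simp
    have "even (card ?Y)"
    proof (rule less.hyps[OF lt])
      show "finite ?Y" using less.prems by simp
      fix z assume z: "z \<in> ?Y"
      have a: "f z \<in> Y \<and> f z \<noteq> z \<and> f (f z) = z" using less.prems z by blast
      have "f z \<noteq> y"
      proof
        assume "f z = y" then have "z = f y" using a by metis
        then show False using z by simp
      qed
      moreover have "f z \<noteq> f y"
      proof
        assume "f z = f y" then have "z = y" using a less.prems(2)[OF y] by metis
        then show False using z by simp
      qed
      ultimately show "f z \<in> ?Y \<and> f z \<noteq> z \<and> f (f z) = z" using a by blast
    qed
    then show ?thesis using c \<open>card Y \<ge> 2\<close> by (metis add_diff_inverse_nat even_add even_numeral linorder_not_le)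
  qed
qed


lemma finite_verts: "finite (verts n)" unfolding verts_def by simp

lemma comp_sub_verts:
  assumes J: "J \<in> perfect_matchings n" and M: "M \<in> perfect_matchings n" and v: "v \<in> verts n"
  shows "comp (J \<union> M) v \<subseteq> verts n"
  unfolding comp_def adj_eq[OF J M]
  by (rule reach_closed[OF v]) (auto simp: st_def intro: pm_in[OF J] pm_in[OF M])

lemma comps_split:
  assumes S: "S \<subseteq> verts n" and cl: "\<And>v. v \<in> S \<Longrightarrow> comp E v \<subseteq> S"
  shows "mset_set (components n E) = mset_set (comp E ` (verts n - S)) + mset_set (comp E ` S)"
proof -
  have "components n E = comp E ` (verts n - S) \<union> comp E ` S"
    unfolding components_def using S by blast
  moreover have "comp E ` (verts n - S) \<inter> comp E ` S = {}"
  proof (rule ccontr)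
    assume "comp E ` (verts n - S) \<inter> comp E ` S \<noteq> {}"
    then obtain u v where "u \<in> verts n - S" "v \<in> S" "comp E u = comp E v" by blast
    then show False using comp_self[of u E] cl by blast
  qed
  ultimately show ?thesis using finite_verts S
    by (simp add: mset_set_Union finite_subset)
qed

lemma swap_local:
  assumes A: "A \<in> perfect_matchings n"
    and S: "S \<subseteq> verts n" and clb: "\<forall>v\<in>S. comp (Jm n \<union> A) v \<subseteq> S"
    and x: "x \<in> S" and t: "t \<in> S"
  defines "A' \<equiv> act (transpose x t) A"
  shows "A' \<in> perfect_matchings n"
    and "\<And>u. u \<in> verts n \<Longrightarrow> pm A' u = transpose x t (pm A (transpose x t u))"
    and "\<And>v. v \<in> verts n - S \<Longrightarrow> comp (A' \<union> Jm n) v = comp (Jm n \<union> A) v"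
    and "\<And>v. v \<in> S \<Longrightarrow> comp (A' \<union> Jm n) v \<subseteq> S"
    and "dist n A' (Jm n) = image_mset card (mset_set (comp (Jm n \<union> A) ` (verts n - S)))
          + image_mset card (mset_set (comp (A' \<union> Jm n) ` S))"
    and "dist n (Jm n) A = image_mset card (mset_set (comp (Jm n \<union> A) ` (verts n - S)))
          + image_mset card (mset_set (comp (Jm n \<union> A) ` S))"
proof -
  let ?\<sigma> = "transpose x t"
  let ?J = "Jm n"
  have cl: "\<And>v. v \<in> S \<Longrightarrow> comp (Jm n \<union> A) v \<subseteq> S" using clb by blast
  have J: "?J \<in> perfect_matchings n" by (rule Jm_pm)
  have xv: "x \<in> verts n" and tv: "t \<in> verts n" using x t S by auto
  note ap = act_pm[OF A xv tv]
  show P: "A' \<in> perfect_matchings n" using ap A'_def by simp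
  show pa: "\<And>u. u \<in> verts n \<Longrightarrow> pm A' u = ?\<sigma> (pm A (?\<sigma> u))" using ap A'_def by simp
  have E': "A' \<union> ?J = ?J \<union> A'" by blast
  have adjE: "adj (?J \<union> A) = st (verts n) (pm ?J) (pm A)" by (rule adj_eq[OF J A])
  have adjE': "adj (A' \<union> ?J) = st (verts n) (pm ?J) (pm A')" using adj_eq[OF J P] E' by simp
  have out: "w \<notin> S \<and> w \<in> verts n" if u: "u \<in> verts n - S" and uw: "(u,w) \<in> adj (?J \<union> A)" for u w
  proof -
    have "w \<in> comp (?J \<union> A) u" using comp_step[OF uw comp_self] .
    then have ce: "comp (?J \<union> A) w = comp (?J \<union> A) u" by (rule comp_eq)
    have "w \<notin> S" using cl[of w] ce comp_self[of u] u by blast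
    moreover have "w \<in> verts n" using uw u unfolding adjE st_def using pm_in[OF J] pm_in[OF A] by auto
    ultimately show ?thesis by blast
  qed
  show co: "comp (A' \<union> ?J) v = comp (?J \<union> A) v" if v: "v \<in> verts n - S" for v
  proof -
    have same: "(u,w) \<in> adj (?J \<union> A) \<longleftrightarrow> (u,w) \<in> adj (A' \<union> ?J)" if u: "u \<in> verts n - S" for u w
    proof -
      have su: "?\<sigma> u = u" using u x t by (auto simp: transpose_def)
      have "(u, pm A u) \<in> adj (?J \<union> A)" using u unfolding adjE st_def by auto
      then have "pm A u \<notin> S" using out u by blast
      then have "?\<sigma> (pm A u) = pm A u" using x t by (auto simp: transpose_def)
      then have "pm A' u = pm A u" using pa[of u] su u by simp
      then show ?thesis unfolding adjE adjE' st_def by simp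
    qed
    have "{w. (v,w) \<in> (adj (?J \<union> A))\<^sup>*} = {w. (v,w) \<in> (adj (A' \<union> ?J))\<^sup>*}"
    proof (rule reach_same[where T="verts n - S"])
      show "v \<in> verts n - S" by (rule v)
      show "\<And>u w. u \<in> verts n - S \<Longrightarrow> ((u, w) \<in> adj (?J \<union> A)) = ((u, w) \<in> adj (A' \<union> ?J))"
        using same by blast
      show "\<And>u w. u \<in> verts n - S \<Longrightarrow> (u, w) \<in> adj (?J \<union> A) \<Longrightarrow> w \<in> verts n - S"
        using out by blast
    qed
    then show ?thesis unfolding comp_def by simp
  qed
  show ci: "comp (A' \<union> ?J) v \<subseteq> S" if v: "v \<in> S" for v
    unfolding comp_def
  proof (rule reach_closed[OF v])
    fix u w assume u: "u \<in> S" and uw: "(u,w) \<in> adj (A' \<union> ?J)"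
    have uv: "u \<in> verts n" using u S by auto
    have clS: "pm ?J y \<in> S \<and> pm A y \<in> S" if y: "y \<in> S" for y
    proof -
      have yv: "y \<in> verts n" using y S by auto
      have "(y, pm ?J y) \<in> adj (?J \<union> A)" "(y, pm A y) \<in> adj (?J \<union> A)" using yv unfolding adjE st_def by auto
      then show ?thesis using comp_step[OF _ comp_self] cl[OF y] by blast
    qed
    have sS: "?\<sigma> y \<in> S" if "y \<in> S" for y using that x t by (simp add: transpose_def)
    have "?\<sigma> (pm A (?\<sigma> u)) \<in> S" using sS clS u by blast
    then show "w \<in> S" using uw clS[OF u] pa[OF uv] unfolding adjE' st_def by auto
  qed
  have d1: "dist n A' ?J = image_mset card (mset_set (comp (A' \<union> ?J) ` (verts n - S)))
          + image_mset card (mset_set (comp (A' \<union> ?J) ` S))"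
    using comps_split[of S n "A' \<union> ?J", OF S ci] unfolding dist_def by simp
  have "comp (A' \<union> ?J) ` (verts n - S) = comp (?J \<union> A) ` (verts n - S)" using co by auto
  then show "dist n A' ?J = image_mset card (mset_set (comp (?J \<union> A) ` (verts n - S)))
          + image_mset card (mset_set (comp (A' \<union> ?J) ` S))" using d1 by simp
  show "dist n ?J A = image_mset card (mset_set (comp (?J \<union> A) ` (verts n - S)))
          + image_mset card (mset_set (comp (?J \<union> A) ` S))"
    using comps_split[of S n "?J \<union> A", OF S cl] unfolding dist_def by simp
qed


lemma merge_comp:
  assumes A: "A \<in> perfect_matchings n" and xv: "x \<in> verts n" and zv: "z \<in> verts n"
    and z: "z \<notin> comp (Jm n \<union> A) x"
  shows "comp (Jm n \<union> A) x \<subseteq> comp (act (transpose x z) A \<union> Jm n) x"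
proof -
  let ?J = "Jm n" let ?V = "verts n"
  let ?\<sigma> = "transpose x z"
  let ?A' = "act ?\<sigma> A"
  let ?C = "comp (?J \<union> A) x"
  let ?b = "pm A x"
  have J: "?J \<in> perfect_matchings n" by (rule Jm_pm)
  note ap = act_pm[OF A xv zv]
  have P: "?A' \<in> perfect_matchings n" using ap by simp
  have pa: "\<And>u. u \<in> ?V \<Longrightarrow> pm ?A' u = ?\<sigma> (pm A (?\<sigma> u))" using ap by simp
  have adjE: "adj (?J \<union> A) = st ?V (pm ?J) (pm A)" by (rule adj_eq[OF J A])
  have adjE': "adj (?A' \<union> ?J) = st ?V (pm ?J) (pm ?A')" using adj_eq[OF J P] by (simp add: Un_commute)
  define G where "G = {(u,w). u \<in> ?V \<and> (w = pm ?J u \<or> (w = pm A u \<and> u \<noteq> x \<and> u \<noteq> ?b))}"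
  have bv: "?b \<in> ?V" using pm_in[OF A xv] .
  have pAb: "pm A ?b = x" using pm_pm[OF A xv] .
  have s1: "(x,w) \<in> G\<^sup>* \<or> (?b,w) \<in> G\<^sup>*" if w: "w \<in> ?C" for w
  proof -
    from w have "(x,w) \<in> (adj (?J \<union> A))\<^sup>*" unfolding comp_def by simp
    then show ?thesis
    proof (induction rule: rtrancl_induct)
      case base then show ?case by simp
    next
      case (step y y')
      from step.hyps(2) have y: "y \<in> ?V" and y': "y' = pm ?J y \<or> y' = pm A y" unfolding adjE st_def by auto
      show ?case
      proof (cases "y' = pm ?J y \<or> (y' = pm A y \<and> y \<noteq> x \<and> y \<noteq> ?b)")
        case True
        then have "(y,y') \<in> G" unfolding G_def using y by auto
        then show ?thesis using step.IH by (meson rtrancl.rtrancl_into_rtrancl)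
      next
        case False
        then have "(y = x \<and> y' = ?b) \<or> (y = ?b \<and> y' = x)" using y' pAb by blast
        then show ?thesis by blast
      qed
    qed
  qed
  have s2: "(x, ?b) \<in> G\<^sup>*"
  proof (rule ccontr)
    assume nb: "(x, ?b) \<notin> G\<^sup>*"
    define X where "X = {w. (x,w) \<in> G\<^sup>*}"
    have Xv: "X \<subseteq> ?V" unfolding X_def
    proof (rule reach_closed[OF xv])
      fix u w assume "u \<in> ?V" "(u,w) \<in> G"
      then show "w \<in> ?V" unfolding G_def using pm_in[OF J, of u] pm_in[OF A, of u] by blast
    qed
    have fin: "finite X" using Xv finite_verts finite_subset by blast
    have xX: "x \<in> X" unfolding X_def by simp
    have e1: "even (card X)"
    proof (rule even_inv[OF fin, of "pm ?J"])
      fix y assume y: "y \<in> X"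
      then have yv: "y \<in> ?V" using Xv by blast
      have "(y, pm ?J y) \<in> G" unfolding G_def using yv by simp
      then have "pm ?J y \<in> X" using y unfolding X_def by (simp add: rtrancl.rtrancl_into_rtrancl)
      then show "pm ?J y \<in> X \<and> pm ?J y \<noteq> y \<and> pm ?J (pm ?J y) = y"
        using pm_neq[OF J yv] pm_pm[OF J yv] by blast
    qed
    have e2: "even (card (X - {x}))"
    proof (rule even_inv[of _ "pm A"])
      show "finite (X - {x})" using fin by simp
      fix y assume y: "y \<in> X - {x}"
      then have yv: "y \<in> ?V" using Xv by blast
      have yx: "y \<noteq> x" using y by blast
      have xy: "(x,y) \<in> G\<^sup>*" using y unfolding X_def by blast
      have yb: "y \<noteq> ?b"
      proof
        assume "y = ?b" then show False using xy nb by simp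
      qed
      have "(y, pm A y) \<in> G" unfolding G_def using yv yx yb by simp
      then have "(x, pm A y) \<in> G\<^sup>*" using xy by (rule rtrancl.rtrancl_into_rtrancl[rotated])
      then have "pm A y \<in> X" unfolding X_def by simp
      moreover have "pm A y \<noteq> x"
      proof
        assume "pm A y = x" then have "pm A (pm A y) = ?b" by simp
        then show False using yb pm_pm[OF A yv] by simp
      qed
      ultimately show "pm A y \<in> X - {x} \<and> pm A y \<noteq> y \<and> pm A (pm A y) = y"
        using pm_neq[OF A yv] pm_pm[OF A yv] by blast
    qed
    have "card (X - {x}) = card X - 1" using fin xX by simp
    moreover have "card X > 0" using fin xX card_gt_0_iff by blast
    ultimately obtain m where "card X = Suc m" "card (X - {x}) = m" using gr0_conv_Suc by auto
    then show False using e1 e2 by simp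
  qed
  have zC: "\<And>u. u \<in> ?C \<Longrightarrow> u \<noteq> z" using z by blast
  have s3: "(v,w) \<in> (adj (?A' \<union> ?J))\<^sup>*" if vw: "(v,w) \<in> G\<^sup>*" and v: "v \<in> ?C" for v w
  proof (rule reach_mono_in[OF vw v])
    fix u w assume u: "u \<in> ?C" and uw: "(u,w) \<in> G"
    have uv: "u \<in> ?V" using uw unfolding G_def by simp
    have uwE: "(u,w) \<in> adj (?J \<union> A)" using uw unfolding G_def adjE st_def by auto
    have "w \<in> ?C" using comp_step[OF uwE u] .
    moreover have "(u,w) \<in> adj (?A' \<union> ?J)"
    proof (cases "w = pm ?J u")
      case True then show ?thesis unfolding adjE' st_def using uv by simp
    next
      case False
      then have w: "w = pm A u" "u \<noteq> x" "u \<noteq> ?b" using uw unfolding G_def by auto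
      have "(u, pm A u) \<in> adj (?J \<union> A)" unfolding adjE st_def using uv by simp
      then have "pm A u \<in> ?C" using comp_step u by blast
      then have "pm A u \<noteq> z" using zC by blast
      moreover have "pm A u \<noteq> x"
      proof
        assume "pm A u = x" then have "pm A (pm A u) = ?b" by simp
        then show False using w pm_pm[OF A uv] by simp
      qed
      moreover have "?\<sigma> u = u" using w(2) zC[OF u] by simp
      ultimately have "pm ?A' u = pm A u" using pa[OF uv] by simp
      then show ?thesis unfolding adjE' st_def using uv w by simp
    qed
    ultimately show "w \<in> ?C \<and> (u,w) \<in> adj (?A' \<union> ?J)" by blast
  qed
  have xC: "x \<in> ?C" by (rule comp_self)
  have bC: "?b \<in> ?C" using comp_step[OF _ xC, of ?b] unfolding adjE st_def using xv by simp
  have xb': "(x, ?b) \<in> (adj (?A' \<union> ?J))\<^sup>*" using s3[OF s2 xC] .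
  show ?thesis
  proof
    fix w assume w: "w \<in> ?C"
    from s1[OF w] show "w \<in> comp (?A' \<union> ?J) x"
    proof
      assume "(x,w) \<in> G\<^sup>*" then have "(x,w) \<in> (adj (?A' \<union> ?J))\<^sup>*" by (rule s3[OF _ xC])
      then show ?thesis unfolding comp_def by simp
    next
      assume "(?b,w) \<in> G\<^sup>*" then have "(?b,w) \<in> (adj (?A' \<union> ?J))\<^sup>*" by (rule s3[OF _ bC])
      then show ?thesis using xb' unfolding comp_def by simp
    qed
  qed
qed


lemma part_i:
  assumes n: "n \<ge> 1" and A: "A \<in> perfect_matchings n"
    and sv: "s \<in> verts n" and sC: "s \<notin> comp (Jm n \<union> A) (2*n - 1)"
  defines "A' \<equiv> act (transpose s (2*n - 1)) A"
  shows "dist n A' (Jm n) =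
            dist n (Jm n) A - {# card (comp (Jm n \<union> A) s), card (comp (Jm n \<union> A) (2*n - 1)) #}
              + {# card (comp (Jm n \<union> A) s) + card (comp (Jm n \<union> A) (2*n - 1)) #}
          \<and> card (comp (A' \<union> Jm n) (2*n - 1)) =
              card (comp (Jm n \<union> A) s) + card (comp (Jm n \<union> A) (2*n - 1))"
proof -
  let ?J = "Jm n" let ?V = "verts n" let ?E = "?J \<union> A" let ?E' = "A' \<union> ?J"
  let ?t = "2*n - 1"
  let ?Ct = "comp ?E ?t" let ?Cj = "comp ?E s"
  let ?\<sigma> = "transpose s ?t"
  have J: "?J \<in> perfect_matchings n" by (rule Jm_pm)
  have tv: "?t \<in> ?V" using n unfolding verts_def by auto
  have Ctv: "?Ct \<subseteq> ?V" by (rule comp_sub_verts[OF J A tv])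
  have Cjv: "?Cj \<subseteq> ?V" by (rule comp_sub_verts[OF J A sv])
  have fin: "finite ?Ct" "finite ?Cj" using Ctv Cjv finite_verts finite_subset by blast+
  have disj: "?Ct \<inter> ?Cj = {}"
  proof (rule ccontr)
    assume "?Ct \<inter> ?Cj \<noteq> {}"
    then obtain w where "w \<in> ?Ct" "w \<in> ?Cj" by blast
    then have "?Ct = ?Cj" using comp_eq by metis
    then show False using sC comp_self[of s ?E] by simp
  qed
  have tCj: "?t \<notin> ?Cj" using disj comp_self[of ?t ?E] by blast
  define S where "S = ?Ct \<union> ?Cj"
  have S: "S \<subseteq> ?V" using Ctv Cjv S_def by blast
  have cl: "comp ?E v \<subseteq> S" if v: "v \<in> S" for v
    using v comp_eq[of v ?E ?t] comp_eq[of v ?E s] unfolding S_def by blast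
  have tS: "?t \<in> S" and sS: "s \<in> S" unfolding S_def using comp_self by blast+
  have clb: "\<forall>v\<in>S. comp ?E v \<subseteq> S" using cl by blast
  note L = swap_local[OF A S clb sS tS, folded A'_def]
  have P: "A' \<in> perfect_matchings n" using L(1) .
  have adjE': "adj ?E' = st ?V (pm ?J) (pm A')" using adj_eq[OF J P] by (simp add: Un_commute)
  have m1: "?Cj \<subseteq> comp ?E' s" using merge_comp[OF A sv tv tCj] unfolding A'_def .
  have m2: "?Ct \<subseteq> comp ?E' ?t" using merge_comp[OF A tv sv sC] unfolding A'_def
    by (simp add: transpose_commute)
  have bCj: "pm A s \<in> ?Cj" using comp_step[OF _ comp_self, of s "pm A s" ?E] adj_eq[OF J A] sv
    unfolding st_def by simp
  have "pm A' ?t = ?\<sigma> (pm A (?\<sigma> ?t))" using L(2)[OF tv] .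
  also have "\<dots> = pm A s"
  proof -
    have "pm A s \<noteq> ?t" using bCj tCj by metis
    then show ?thesis using pm_neq[OF A sv] by (simp add: transpose_def)
  qed
  finally have pAt: "pm A' ?t = pm A s" .
  have "pm A s \<in> comp ?E' ?t" using comp_step[OF _ comp_self, of ?t "pm A s" ?E'] adjE' tv pAt
    unfolding st_def by simp
  then have eq1: "comp ?E' (pm A s) = comp ?E' ?t" by (rule comp_eq)
  have "comp ?E' (pm A s) = comp ?E' s" using m1 bCj comp_eq by blast
  then have eqst: "comp ?E' s = comp ?E' ?t" using eq1 by simp
  have "S \<subseteq> comp ?E' ?t" using m1 m2 eqst S_def by blast
  then have cS: "comp ?E' ?t = S" using L(4)[OF tS] by blast
  have cS': "comp ?E' v = S" if v: "v \<in> S" for v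
  proof -
    have "v \<in> comp ?E' ?t" using cS v by simp
    then have "comp ?E' v = comp ?E' ?t" by (rule comp_eq)
    then show ?thesis using cS by simp
  qed
  have im': "comp ?E' ` S = {S}"
  proof
    show "comp ?E' ` S \<subseteq> {S}" using cS' by blast
    show "{S} \<subseteq> comp ?E' ` S" using cS tS by blast
  qed
  have im: "comp ?E ` S = {?Ct, ?Cj}"
  proof
    show "comp ?E ` S \<subseteq> {?Ct, ?Cj}"
    proof
      fix C assume "C \<in> comp ?E ` S"
      then obtain v where v: "v \<in> S" "C = comp ?E v" by blast
      then have "v \<in> ?Ct \<or> v \<in> ?Cj" unfolding S_def by blast
      then show "C \<in> {?Ct, ?Cj}"
      proof
        assume "v \<in> ?Ct" then show ?thesis using comp_eq[of v ?E ?t] v by simp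
      next
        assume "v \<in> ?Cj" then show ?thesis using comp_eq[of v ?E s] v by simp
      qed
    qed
    show "{?Ct, ?Cj} \<subseteq> comp ?E ` S" using tS sS by blast
  qed
  have ne: "?Ct \<noteq> ?Cj" using disj comp_self[of ?t ?E] by blast
  have cardS: "card S = card ?Cj + card ?Ct" unfolding S_def using card_Un_disjoint[OF fin(1) fin(2) disj] by simp
  define X where "X = image_mset card (mset_set (comp ?E ` (?V - S)))"
  have d1: "dist n A' ?J = X + {# card ?Cj + card ?Ct #}" using L(5) im' cardS X_def by simp
  have d2: "dist n ?J A = X + {# card ?Cj, card ?Ct #}" using L(6) im ne X_def by simp
  show ?thesis using d1 d2 cS cardS by simp
qed

definition jx :: "nat \<Rightarrow> nat" where "jx i = (if even i then i+1 else i-1)"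
definition ax :: "nat \<Rightarrow> nat \<Rightarrow> nat" where
  "ax N i = (if odd i then (if i+1 = N then 0 else i+1) else (if i = 0 then N-1 else i-1))"

definition K1 where "K1 N p = {0,1} \<union> {p+1..<N}"

lemma idx_a:
  assumes N: "N = 2*k+2" and j: "1 \<le> j" "j \<le> k" and p: "p = 2*j+1"
  shows "\<And>i. i \<in> K1 N p \<Longrightarrow> jx i \<in> K1 N p \<and> transpose p 1 (ax N (transpose p 1 i)) \<in> K1 N p"
    and "\<And>i. i \<in> {2..p} \<Longrightarrow> jx i \<in> {2..p} \<and> transpose p 1 (ax N (transpose p 1 i)) \<in> {2..p}"
    and "\<And>i. p+1 \<le> i \<Longrightarrow> i < N-1 \<Longrightarrow> i+1 = jx i \<or> i+1 = transpose p 1 (ax N (transpose p 1 i))"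
    and "\<And>i. 2 \<le> i \<Longrightarrow> i < p \<Longrightarrow> i+1 = jx i \<or> i+1 = transpose p 1 (ax N (transpose p 1 i))"
    and "jx 1 = 0" and "p+1 < N \<Longrightarrow> transpose p 1 (ax N (transpose p 1 1)) = p+1"
  using assms by (auto simp: K1_def jx_def ax_def transpose_def) presburger+

lemma idx_b:
  assumes N: "N = 2*k+2" and j: "1 \<le> j" "j \<le> k" and p: "p = 2*j"
  shows "\<And>i. 2 < i \<Longrightarrow> i < p \<Longrightarrow> i-1 = jx i \<or> i-1 = transpose p 1 (ax N (transpose p 1 i))"
    and "\<And>i. p \<le> i \<Longrightarrow> i < N-1 \<Longrightarrow> i+1 = jx i \<or> i+1 = transpose p 1 (ax N (transpose p 1 i))"
    and "jx 0 = 1" and "p = 2 \<Longrightarrow> transpose p 1 (ax N (transpose p 1 1)) = p"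
    and "p \<noteq> 2 \<Longrightarrow> transpose p 1 (ax N (transpose p 1 1)) = p - 1"
    and "p \<noteq> 2 \<Longrightarrow> transpose p 1 (ax N (transpose p 1 2)) = p"
    and "N - 1 = transpose p 1 (ax N (transpose p 1 0))"
  using assms by (auto simp: jx_def ax_def transpose_def)

lemma nth_eq_idx: "distinct L \<Longrightarrow> i < length L \<Longrightarrow> j < length L \<Longrightarrow> L!i = L!j \<longleftrightarrow> i = j"
  by (simp add: nth_eq_iff_index_eq)

lemma alt_lemma:
  assumes J: "J \<in> perfect_matchings n" and A: "A \<in> perfect_matchings n"
    and N: "length L = N" "4 \<le> N" and dL: "distinct L" and Lv: "set L \<subseteq> verts n"
    and e0: "{L!0, L!1} \<in> J" and E: "\<forall>m<N. {L!m, L!((m+1) mod N)} \<in> J \<union> A"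
  shows "m < N \<Longrightarrow> (even m \<longrightarrow> {L!m, L!((m+1) mod N)} \<in> J) \<and> (odd m \<longrightarrow> {L!m, L!((m+1) mod N)} \<in> A)"
proof (induction m)
  case 0
  have "(0+1) mod N = 1" using N by simp
  then show ?case using e0 by simp
next
  case (Suc m)
  have m: "m < N" using Suc.prems by simp
  have sm: "(m+1) mod N = Suc m" using Suc.prems by simp
  let ?a = "L!m" let ?b = "L!(Suc m)" let ?c = "L!((Suc m + 1) mod N)"
  have bv: "?b \<in> verts n" using Lv Suc.prems N nth_mem by (metis subsetD)
  have idx: "m \<noteq> (Suc m + 1) mod N"
  proof (cases "Suc m + 1 < N")
    case True then show ?thesis by simp
  next
    case False then have "Suc m + 1 = N" using Suc.prems by simp
    then show ?thesis using N by simp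
  qed
  have ac: "?a \<noteq> ?c" using nth_eq_idx[OF dL, of m "(Suc m + 1) mod N"] idx m N by simp
  have ebc: "{?b, ?c} \<in> J \<union> A" using E Suc.prems by simp
  have IH: "(even m \<longrightarrow> {?a, ?b} \<in> J) \<and> (odd m \<longrightarrow> {?a, ?b} \<in> A)" using Suc.IH[OF m] sm by simp
  show ?case
  proof (cases "even m")
    case True
    then have "{?b, ?a} \<in> J" using IH by (simp add: insert_commute)
    then have "?a = pm J ?b" using pm_char[OF J bv] by simp
    moreover have "{?b, ?c} \<in> J \<Longrightarrow> ?c = pm J ?b" using pm_char[OF J bv] by simp
    ultimately have "{?b, ?c} \<in> A" using ebc ac by auto
    then show ?thesis using True by simp
  next
    case False
    then have "{?b, ?a} \<in> A" using IH by (simp add: insert_commute)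
    then have "?a = pm A ?b" using pm_char[OF A bv] by simp
    moreover have "{?b, ?c} \<in> A \<Longrightarrow> ?c = pm A ?b" using pm_char[OF A bv] by simp
    ultimately have "{?b, ?c} \<in> J" using ebc ac by auto
    then show ?thesis using False by simp
  qed
qed

lemma partners:
  assumes J: "J \<in> perfect_matchings n" and A: "A \<in> perfect_matchings n"
    and N: "length L = N" "4 \<le> N" "even N" and dL: "distinct L" and Lv: "set L \<subseteq> verts n"
    and e0: "{L!0, L!1} \<in> J" and E: "\<forall>m<N. {L!m, L!((m+1) mod N)} \<in> J \<union> A"
    and i: "i < N"
  shows "pm J (L!i) = L!(jx i) \<and> pm A (L!i) = L!(ax N i)"
proof -
  note alt = alt_lemma[OF J A N(1,2) dL Lv e0 E]
  have Lin: "\<And>m. m < N \<Longrightarrow> L!m \<in> verts n" using Lv N nth_mem by (metis subsetD)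
  have iv: "L!i \<in> verts n" using Lin[OF i] .
  show ?thesis
  proof (cases "even i")
    case True
    have i1: "i+1 < N" using True i N(3) by presburger
    then have "{L!i, L!(i+1)} \<in> J" using alt[OF i] True by simp
    then have pj: "pm J (L!i) = L!(jx i)" using pm_char[OF J iv] True by (simp add: jx_def)
    have pa: "pm A (L!i) = L!(ax N i)"
    proof (cases "i = 0")
      case True
      have m: "N - 1 < N" "odd (N-1)" "(N - 1 + 1) mod N = 0" using N by auto
      then have "{L!(N-1), L!0} \<in> A" using alt[OF m(1)] by simp
      then have "{L!0, L!(N-1)} \<in> A" by (simp add: insert_commute)
      then show ?thesis using pm_char[OF A iv] True by (simp add: ax_def)
    next
      case False
      have m: "i - 1 < N" "odd (i-1)" "(i - 1 + 1) mod N = i" using False \<open>even i\<close> i by auto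
      then have "{L!(i-1), L!i} \<in> A" using alt[OF m(1)] by simp
      then have "{L!i, L!(i-1)} \<in> A" by (simp add: insert_commute)
      then show ?thesis using pm_char[OF A iv] False \<open>even i\<close> by (simp add: ax_def)
    qed
    show ?thesis using pj pa by simp
  next
    case False
    have m: "i - 1 < N" "even (i-1)" "(i - 1 + 1) mod N = i" using False i by auto
    then have "{L!(i-1), L!i} \<in> J" using alt[OF m(1)] by simp
    then have "{L!i, L!(i-1)} \<in> J" by (simp add: insert_commute)
    then have pj: "pm J (L!i) = L!(jx i)" using pm_char[OF J iv] False by (simp add: jx_def)
    have "{L!i, L!((i+1) mod N)} \<in> A" using alt[OF i] False by simp
    moreover have "(i+1) mod N = ax N i" using False i by (auto simp: ax_def)
    ultimately have pa: "pm A (L!i) = L!(ax N i)" using pm_char[OF A iv] by simp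
    show ?thesis using pj pa by simp
  qed
qed

lemma sig_nth:
  assumes "distinct L" "i < length L" "p < length L" "q < length L"
  shows "transpose (L!p) (L!q) (L!i) = L!(transpose p q i)"
  using nth_eq_idx[OF assms(1)] assms by (auto simp: transpose_def)




lemma asc:
  fixes a b i :: nat
  assumes cl: "\<And>i. i \<in> I \<Longrightarrow> f i \<in> I \<and> g i \<in> I" and a: "a \<in> I"
    and st: "\<And>i. a \<le> i \<Longrightarrow> i < b \<Longrightarrow> i+1 = f i \<or> i+1 = g i"
  shows "a \<le> i \<Longrightarrow> i \<le> b \<Longrightarrow> i \<in> I"
proof (induction i)
  case 0 then show ?case using a by simp
next
  case (Suc i)
  show ?case
  proof (cases "a = Suc i")
    case True then show ?thesis using a by simp
  next
    case False
    then have "a \<le> i" "i < b" using Suc.prems by auto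
    have iI: "i \<in> I" using Suc.IH \<open>a \<le> i\<close> \<open>i < b\<close> by simp
    have d: "Suc i = f i \<or> Suc i = g i" using st \<open>a \<le> i\<close> \<open>i < b\<close> by simp
    have "f i \<in> I \<and> g i \<in> I" using cl iI by blast
    then show ?thesis using d by auto
  qed
qed

lemma desc:
  fixes a b i :: nat
  assumes cl: "\<And>i. i \<in> I \<Longrightarrow> f i \<in> I \<and> g i \<in> I" and b: "b \<in> I"
    and st: "\<And>i. a < i \<Longrightarrow> i \<le> b \<Longrightarrow> i-1 = f i \<or> i-1 = g i"
  shows "a \<le> i \<Longrightarrow> i \<le> b \<Longrightarrow> i \<in> I"
proof (induction "b - i" arbitrary: i)
  case 0 then have "i = b" by simp
  then show ?case using b by simp
next
  case (Suc d)
  then have "a < Suc i" "Suc i \<le> b" "d = b - Suc i" by auto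
  then have "Suc i \<in> I" using Suc.hyps(1) by simp
  have d: "i = f (Suc i) \<or> i = g (Suc i)" using st[of "Suc i"] \<open>a < Suc i\<close> \<open>Suc i \<le> b\<close> by simp
  have "f (Suc i) \<in> I \<and> g (Suc i) \<in> I" using cl \<open>Suc i \<in> I\<close> by blast
  then show ?case using d by auto
qed

lemma swap_idx:
  assumes A: "A \<in> perfect_matchings n"
    and N: "length L = N" and dL: "distinct L" and Lv: "set L \<subseteq> verts n"
    and PTb: "\<forall>i<N. pm (Jm n) (L!i) = L!(jx i) \<and> pm A (L!i) = L!(ax N i)"
    and p: "p < N" and one: "1 < N" and evN: "even N"
  defines "A' \<equiv> act (transpose (L!p) (L!1)) A"
  shows "A' \<in> perfect_matchings n"
    and "\<And>i. i < N \<Longrightarrow> pm A' (L!i) = L!(transpose p 1 (ax N (transpose p 1 i)))"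
    and "\<And>i v. i < N \<Longrightarrow> L!i \<in> comp (A' \<union> Jm n) v \<Longrightarrow>
            L!(jx i) \<in> comp (A' \<union> Jm n) v \<and> jx i < N \<and>
            L!(transpose p 1 (ax N (transpose p 1 i))) \<in> comp (A' \<union> Jm n) v \<and> transpose p 1 (ax N (transpose p 1 i)) < N"
    and "\<And>K i0. K \<subseteq> {..<N} \<Longrightarrow> (\<forall>i\<in>K. jx i \<in> K \<and> transpose p 1 (ax N (transpose p 1 i)) \<in> K) \<Longrightarrow> i0 \<in> K
            \<Longrightarrow> comp (A' \<union> Jm n) (L!i0) \<subseteq> nth L ` K"
proof -
  let ?J = "Jm n" let ?V = "verts n" let ?\<tau> = "transpose p 1"
  have PT: "\<And>i. i < N \<Longrightarrow> pm (Jm n) (L!i) = L!(jx i) \<and> pm A (L!i) = L!(ax N i)" using PTb by blast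
  have J: "?J \<in> perfect_matchings n" by (rule Jm_pm)
  have Lin: "\<And>m. m < N \<Longrightarrow> L!m \<in> verts n" using Lv N nth_mem by (metis subsetD)
  note ap = act_pm[OF A Lin[OF p] Lin[OF one]]
  show P: "A' \<in> perfect_matchings n" using ap A'_def by simp
  have tau: "?\<tau> i < N" if "i < N" for i using that p one by (simp add: transpose_def)
  have axN: "ax N i < N" if "i < N" for i using that by (auto simp: ax_def)
  have jxN: "jx i < N" if "i < N" for i using that evN by (auto simp: jx_def) presburger
  show pa: "pm A' (L!i) = L!(?\<tau> (ax N (?\<tau> i)))" if i: "i < N" for i
  proof -
    have "pm A' (L!i) = transpose (L!p) (L!1) (pm A (transpose (L!p) (L!1) (L!i)))"
      using ap Lin[OF i] A'_def by simp
    also have "transpose (L!p) (L!1) (L!i) = L!(?\<tau> i)" using sig_nth[OF dL] i p one N by simp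
    also have "pm A (L!(?\<tau> i)) = L!(ax N (?\<tau> i))" using PT[OF tau[OF i]] by simp
    also have "transpose (L!p) (L!1) (L!(ax N (?\<tau> i))) = L!(?\<tau> (ax N (?\<tau> i)))"
      using sig_nth[OF dL] axN[OF tau[OF i]] p one N by simp
    finally show ?thesis .
  qed
  have adjE': "adj (A' \<union> ?J) = st ?V (pm ?J) (pm A')" using adj_eq[OF J P] by (simp add: Un_commute)
  show "L!(jx i) \<in> comp (A' \<union> ?J) v \<and> jx i < N \<and>
            L!(?\<tau> (ax N (?\<tau> i))) \<in> comp (A' \<union> ?J) v \<and> ?\<tau> (ax N (?\<tau> i)) < N"
    if i: "i < N" and c: "L!i \<in> comp (A' \<union> ?J) v" for i v
  proof -
    have "(L!i, L!(jx i)) \<in> adj (A' \<union> ?J)" unfolding adjE' st_def using PT[OF i] Lin[OF i] by simp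
    then have 1: "L!(jx i) \<in> comp (A' \<union> ?J) v" by (rule comp_step[OF _ c])
    have "(L!i, L!(?\<tau> (ax N (?\<tau> i)))) \<in> adj (A' \<union> ?J)" unfolding adjE' st_def using pa[OF i] Lin[OF i] by simp
    then have 2: "L!(?\<tau> (ax N (?\<tau> i))) \<in> comp (A' \<union> ?J) v" by (rule comp_step[OF _ c])
    show ?thesis using 1 2 jxN[OF i] tau[OF axN[OF tau[OF i]]] by blast
  qed
  show "comp (A' \<union> ?J) (L!i0) \<subseteq> nth L ` K"
    if K: "K \<subseteq> {..<N}" and cl: "\<forall>i\<in>K. jx i \<in> K \<and> ?\<tau> (ax N (?\<tau> i)) \<in> K" and i0: "i0 \<in> K" for K i0
    unfolding comp_def
  proof (rule reach_closed)
    show "L!i0 \<in> nth L ` K" using i0 by simp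
    fix u w assume u: "u \<in> nth L ` K" and uw: "(u,w) \<in> adj (A' \<union> ?J)"
    then obtain i where i: "i \<in> K" "u = L!i" by blast
    have iN: "i < N" using i K by auto
    have "w = pm ?J u \<or> w = pm A' u" using uw unfolding adjE' st_def by blast
    then have "w = L!(jx i) \<or> w = L!(?\<tau> (ax N (?\<tau> i)))" using i(2) PT[OF iN] pa[OF iN] by simp
    then show "w \<in> nth L ` K" using cl i(1) by blast
  qed
qed


lemma set_L_facts:
  assumes S: "set L = comp (Jm n \<union> A) (L!1)"
  shows "\<forall>v\<in>set L. comp (Jm n \<union> A) v \<subseteq> set L" and "comp (Jm n \<union> A) ` set L = {set L}"
proof -
  have c: "comp (Jm n \<union> A) v = set L" if "v \<in> set L" for v
    using comp_eq[of v "Jm n \<union> A" "L!1"] that S by simp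
  show "\<forall>v\<in>set L. comp (Jm n \<union> A) v \<subseteq> set L" using c by blast
  show "comp (Jm n \<union> A) ` set L = {set L}"
  proof
    show "comp (Jm n \<union> A) ` set L \<subseteq> {set L}" using c by blast
    have "L!1 \<in> set L" using S comp_self by metis
    then show "{set L} \<subseteq> comp (Jm n \<union> A) ` set L" using c by blast
  qed
qed

lemma part_ii_a:
  assumes A: "A \<in> perfect_matchings n"
    and N: "length L = N" and Nk: "N = 2*k+2" and dL: "distinct L" and Lv: "set L \<subseteq> verts n"
    and S: "set L = comp (Jm n \<union> A) (L!1)"
    and PTb: "\<forall>i<N. pm (Jm n) (L!i) = L!(jx i) \<and> pm A (L!i) = L!(ax N i)"
    and j: "1 \<le> j" "j \<le> k"
  defines "A' \<equiv> act (transpose (L!(2*j+1)) (L!1)) A"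
  shows "dist n A' (Jm n) = dist n (Jm n) A - {#N#} + {#N - 2*j, 2*j#}
         \<and> card (comp (A' \<union> Jm n) (L!1)) = N - 2*j"
proof -
  let ?E = "Jm n \<union> A" let ?E' = "A' \<union> Jm n"
  define p where "p = 2*j+1"
  let ?g = "\<lambda>i. transpose p 1 (ax N (transpose p 1 i))"
  have pN: "p < N" and oN: "1 < N" and eN: "even N" and tN: "2 < N" using Nk j p_def by auto
  have A'p: "A' = act (transpose (L!p) (L!1)) A" unfolding A'_def p_def by simp
  note SI = swap_idx[OF A N dL Lv PTb pN oN eN, folded A'p]
  note IX = idx_a[OF Nk j p_def]
  note SF = set_L_facts[OF S]
  have x: "L!p \<in> set L" and t: "L!1 \<in> set L" using pN oN N by auto
  note SL = swap_local[OF A Lv SF(1) x t, folded A'p]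
  define I where "I = {i. i < N \<and> L!i \<in> comp ?E' (L!1)}"
  have clI: "jx i \<in> I \<and> ?g i \<in> I" if "i \<in> I" for i
    using SI(3)[of i "L!1"] that unfolding I_def by auto
  have one: "1 \<in> I" unfolding I_def using oN comp_self by blast
  have zero: "0 \<in> I" using clI[OF one] IX(5) by simp
  have K1I: "K1 N p \<subseteq> I"
  proof
    fix i assume i: "i \<in> K1 N p"
    show "i \<in> I"
    proof (cases "i \<in> {0,1}")
      case True then show ?thesis using one zero by auto
    next
      case False
      then have i2: "p+1 \<le> i" "i \<le> N-1" using i unfolding K1_def by auto
      then have "p+1 < N" by simp
      then have a: "p+1 \<in> I" using clI[OF one] IX(6) by simp
      show ?thesis by (rule asc[OF clI a IX(3) i2])
    qed
  qed
  have K1N: "K1 N p \<subseteq> {..<N}" unfolding K1_def using oN by auto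
  have K1c: "\<forall>i\<in>K1 N p. jx i \<in> K1 N p \<and> ?g i \<in> K1 N p" using IX(1) by blast
  have "1 \<in> K1 N p" unfolding K1_def by simp
  note up1 = SI(4)[OF K1N K1c this]
  have C1: "comp ?E' (L!1) = nth L ` K1 N p" using up1 K1I unfolding I_def by blast
  define I2 where "I2 = {i. i < N \<and> L!i \<in> comp ?E' (L!2)}"
  have clI2: "jx i \<in> I2 \<and> ?g i \<in> I2" if "i \<in> I2" for i
    using SI(3)[of i "L!2"] that unfolding I2_def by auto
  have two: "2 \<in> I2" unfolding I2_def using tN comp_self by blast
  have K2I: "{2..p} \<subseteq> I2"
  proof
    fix i assume i: "i \<in> {2..p}"
    then have i2: "2 \<le> i" "i \<le> p" by auto
    show "i \<in> I2" by (rule asc[OF clI2 two IX(4) i2])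
  qed
  have K2N: "{2..p} \<subseteq> {..<N}" using pN by auto
  have K2c: "\<forall>i\<in>{2..p}. jx i \<in> {2..p} \<and> ?g i \<in> {2..p}" using IX(2) by blast
  have "2 \<in> {2..p}" using p_def j by simp
  note up2 = SI(4)[OF K2N K2c this]
  have C2: "comp ?E' (L!2) = nth L ` {2..p}" using up2 K2I unfolding I2_def by blast
  have im': "comp ?E' ` set L = {nth L ` K1 N p, nth L ` {2..p}}"
  proof
    show "comp ?E' ` set L \<subseteq> {nth L ` K1 N p, nth L ` {2..p}}"
    proof
      fix C assume "C \<in> comp ?E' ` set L"
      then obtain i where i: "i < N" "C = comp ?E' (L!i)" using N by (auto simp: in_set_conv_nth)
      have "i \<in> K1 N p \<or> i \<in> {2..p}" using i unfolding K1_def by auto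
      then show "C \<in> {nth L ` K1 N p, nth L ` {2..p}}"
      proof
        assume "i \<in> K1 N p"
        then have "L!i \<in> comp ?E' (L!1)" using C1 by blast
        then show ?thesis using comp_eq i C1 by blast
      next
        assume "i \<in> {2..p}"
        then have "L!i \<in> comp ?E' (L!2)" using C2 by blast
        then show ?thesis using comp_eq i C2 by blast
      qed
    qed
    have "L!2 \<in> set L" using tN N by simp
    then show "{nth L ` K1 N p, nth L ` {2..p}} \<subseteq> comp ?E' ` set L" using C1 C2 t by blast
  qed
  have injK: "inj_on (nth L) K" if "K \<subseteq> {..<N}" for K using inj_on_nth[OF dL, of K] that N by auto
  have cK1: "card (nth L ` K1 N p) = N - 2*j"
  proof -
    have "card (K1 N p) = card {0,1::nat} + card {p+1..<N}" unfolding K1_def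
      by (rule card_Un_disjoint) (use p_def in auto)
    then have "card (K1 N p) = N - 2*j" using p_def Nk j by simp
    then show ?thesis using card_image[OF injK[OF K1N]] by simp
  qed
  have cK2: "card (nth L ` {2..p}) = 2*j" using card_image[OF injK[OF K2N]] p_def by simp
  have ne: "nth L ` K1 N p \<noteq> nth L ` {2..p}"
  proof
    assume eq: "nth L ` K1 N p = nth L ` {2..p}"
    have "L!1 \<in> nth L ` K1 N p" unfolding K1_def by simp
    then obtain i where "i \<in> {2..p}" "L!1 = L!i" using eq by auto
    then show False using nth_eq_idx[OF dL, of 1 i] pN oN N by auto
  qed
  have cS: "card (set L) = N" using distinct_card[OF dL] N by simp
  define X where "X = image_mset card (mset_set (comp ?E ` (verts n - set L)))"
  have d1: "dist n A' (Jm n) = X + {#N - 2*j, 2*j#}" using SL(5) im' ne cK1 cK2 X_def by simp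
  have d2: "dist n (Jm n) A = X + {#N#}" using SL(6) SF(2) cS X_def by simp
  show ?thesis using d1 d2 C1 cK1 by simp
qed


lemma part_ii_b:
  assumes A: "A \<in> perfect_matchings n"
    and N: "length L = N" and Nk: "N = 2*k+2" and dL: "distinct L" and Lv: "set L \<subseteq> verts n"
    and S: "set L = comp (Jm n \<union> A) (L!1)"
    and PTb: "\<forall>i<N. pm (Jm n) (L!i) = L!(jx i) \<and> pm A (L!i) = L!(ax N i)"
    and j: "1 \<le> j" "j \<le> k"
  defines "A' \<equiv> act (transpose (L!(2*j)) (L!1)) A"
  shows "dist n A' (Jm n) = dist n (Jm n) A
         \<and> card (comp (A' \<union> Jm n) (L!1)) = N"
proof -
  let ?E = "Jm n \<union> A" let ?E' = "A' \<union> Jm n"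
  define p where "p = 2*j"
  let ?g = "\<lambda>i. transpose p 1 (ax N (transpose p 1 i))"
  have pN: "p < N" and oN: "1 < N" and eN: "even N" and tN: "2 < N" and p2: "2 \<le> p" using Nk j p_def by auto
  have A'p: "A' = act (transpose (L!p) (L!1)) A" unfolding A'_def p_def by simp
  note SI = swap_idx[OF A N dL Lv PTb pN oN eN, folded A'p]
  note IX = idx_b[OF Nk j p_def]
  note SF = set_L_facts[OF S]
  have x: "L!p \<in> set L" and t: "L!1 \<in> set L" using pN oN N by auto
  note SL = swap_local[OF A Lv SF(1) x t, folded A'p]
  define I where "I = {i. i < N \<and> L!i \<in> comp ?E' (L!1)}"
  have clI: "jx i \<in> I \<and> ?g i \<in> I" if "i \<in> I" for i
    using SI(3)[of i "L!1"] that unfolding I_def by auto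
  have one: "1 \<in> I" unfolding I_def using oN comp_self by blast
  have zero: "0 \<in> I" using clI[OF one] by (simp add: jx_def)
  have mid: "i \<in> I" if i: "2 \<le> i" "i < p" for i
  proof -
    have p3: "p \<noteq> 2" using i by auto
    have b: "p - 1 \<in> I" using clI[OF one] IX(5)[OF p3] by simp
    show ?thesis by (rule desc[OF clI b IX(1)]) (use i in auto)
  qed
  have pI: "p \<in> I"
  proof (cases "p = 2")
    case True then show ?thesis using clI[OF one] IX(4) by simp
  next
    case False
    then have "2 \<in> I" using mid p2 by simp
    then have "?g 2 \<in> I" using clI by blast
    then show ?thesis using IX(6)[OF False] by simp
  qed
  have allI': "i \<in> I" if i: "i < N" for i
  proof -
    consider "i = 0" | "i = 1" | "2 \<le> i \<and> i < p" | "p \<le> i \<and> i \<le> N - 1" using i by linarith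
    then show ?thesis
    proof cases
      case 1 then show ?thesis using zero by simp
    next
      case 2 then show ?thesis using one by simp
    next
      case 3 then show ?thesis using mid by blast
    next
      case 4 then have "p \<le> i" "i \<le> N - 1" by auto
      then show ?thesis using asc[OF clI pI IX(2), of i] by simp
    qed
  qed
  have "set L \<subseteq> comp ?E' (L!1)"
  proof
    fix v assume "v \<in> set L"
    then obtain i where "i < N" "v = L!i" using N by (auto simp: in_set_conv_nth)
    then show "v \<in> comp ?E' (L!1)" using allI' unfolding I_def by blast
  qed
  then have C: "comp ?E' (L!1) = set L" using SL(4)[OF t] by blast
  have im': "comp ?E' ` set L = {set L}"
  proof
    show "comp ?E' ` set L \<subseteq> {set L}"
    proof
      fix C assume "C \<in> comp ?E' ` set L"
      then obtain v where v: "v \<in> set L" "C = comp ?E' v" by blast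
      then have "v \<in> comp ?E' (L!1)" using C by simp
      then have "comp ?E' v = comp ?E' (L!1)" by (rule comp_eq)
      then show "C \<in> {set L}" using v C by simp
    qed
    show "{set L} \<subseteq> comp ?E' ` set L" using C t by blast
  qed
  have cS: "card (set L) = N" using distinct_card[OF dL] N by simp
  show ?thesis using SL(5) SL(6) im' SF(2) C cS by simp
qed

theorem lemma5p4:
  fixes n :: nat and A :: "nat set set"
  assumes n: "n \<ge> 1"
    and A: "A \<in> perfect_matchings n"
  shows
    "(\<forall>s. s \<in> verts n \<and> s \<notin> comp (Jm n \<union> A) (2*n - 1) \<longrightarrow>
        (let A' = act (transpose s (2*n - 1)) A in
          dist n A' (Jm n) =
            dist n (Jm n) A - {# card (comp (Jm n \<union> A) s), card (comp (Jm n \<union> A) (2*n - 1)) #}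
              + {# card (comp (Jm n \<union> A) s) + card (comp (Jm n \<union> A) (2*n - 1)) #}
          \<and> card (comp (A' \<union> Jm n) (2*n - 1)) =
              card (comp (Jm n \<union> A) s) + card (comp (Jm n \<union> A) (2*n - 1))))
   \<and> (\<forall>is k. length is = 2*k
        \<and> distinct ([2*n, 2*n - 1] @ is)
        \<and> set ([2*n, 2*n - 1] @ is) = comp (Jm n \<union> A) (2*n - 1)
        \<and> (\<forall>m < length ([2*n, 2*n - 1] @ is).
             {([2*n, 2*n - 1] @ is) ! m, ([2*n, 2*n - 1] @ is) ! ((m + 1) mod (2*k + 2))} \<in> Jm n \<union> A)
      \<longrightarrow> (\<forall>j. 1 \<le> j \<and> j \<le> k \<longrightarrow>
            (let A' = act (transpose (is ! (2*j - 1)) (2*n - 1)) A;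
                 ct = card (comp (Jm n \<union> A) (2*n - 1)) in
              dist n A' (Jm n) = dist n (Jm n) A - {# ct #} + {# ct - 2*j, 2*j #}
              \<and> card (comp (A' \<union> Jm n) (2*n - 1)) = ct - 2*j)
          \<and> (let A' = act (transpose (is ! (2*j - 2)) (2*n - 1)) A;
                 ct = card (comp (Jm n \<union> A) (2*n - 1)) in
              dist n A' (Jm n) = dist n (Jm n) A
              \<and> card (comp (A' \<union> Jm n) (2*n - 1)) = ct)))"
  proof (intro conjI allI impI)
  let ?J = "Jm n" let ?E = "Jm n \<union> A"
  have J: "?J \<in> perfect_matchings n" by (rule Jm_pm)
  fix s assume "s \<in> verts n \<and> s \<notin> comp (Jm n \<union> A) (2*n - 1)"
  then show "let A' = act (transpose s (2*n - 1)) A in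
          dist n A' (Jm n) =
            dist n (Jm n) A - {# card (comp (Jm n \<union> A) s), card (comp (Jm n \<union> A) (2*n - 1)) #}
              + {# card (comp (Jm n \<union> A) s) + card (comp (Jm n \<union> A) (2*n - 1)) #}
          \<and> card (comp (A' \<union> Jm n) (2*n - 1)) =
              card (comp (Jm n \<union> A) s) + card (comp (Jm n \<union> A) (2*n - 1))"
    unfolding Let_def using part_i[OF n A] by blast
next
  fix "is" k j
  assume H: "length is = 2*k
        \<and> distinct ([2*n, 2*n - 1] @ is)
        \<and> set ([2*n, 2*n - 1] @ is) = comp (Jm n \<union> A) (2*n - 1)
        \<and> (\<forall>m < length ([2*n, 2*n - 1] @ is).
             {([2*n, 2*n - 1] @ is) ! m, ([2*n, 2*n - 1] @ is) ! ((m + 1) mod (2*k + 2))} \<in> Jm n \<union> A)"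
    and j: "1 \<le> j \<and> j \<le> k"
  let ?J = "Jm n" let ?E = "Jm n \<union> A"
  have J: "?J \<in> perfect_matchings n" by (rule Jm_pm)
  define L where "L = [2*n, 2*n - 1] @ is"
  define N where "N = 2*k+2"
  have LN: "length L = N" using H unfolding L_def N_def by simp
  have dL: "distinct L" using H L_def by simp
  have L1: "L!1 = 2*n - 1" unfolding L_def by simp
  have S: "set L = comp ?E (L!1)" using H L_def L1 by simp
  have tv: "2*n - 1 \<in> verts n" using n unfolding verts_def by auto
  have Lv: "set L \<subseteq> verts n" using S L1 comp_sub_verts[OF J A tv] by simp
  have e0: "{L!0, L!1} \<in> ?J" unfolding L_def Jm_def using n by (auto simp: insert_commute)
  have E: "\<forall>m<N. {L!m, L!((m+1) mod N)} \<in> ?J \<union> A" using H LN unfolding L_def N_def by simp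
  have N4: "4 \<le> N" and eN: "even N" using j N_def by auto
  have PTb: "\<forall>i<N. pm (Jm n) (L!i) = L!(jx i) \<and> pm A (L!i) = L!(ax N i)"
    using partners[OF J A LN N4 eN dL Lv e0 E] by blast
  have ct: "card (comp ?E (2*n - 1)) = N" using S L1 distinct_card[OF dL] LN by simp
  have i1: "is ! (2*j - 1) = L!(2*j+1)" using j unfolding L_def by (simp add: nth_append)
  have i2: "is ! (2*j - 2) = L!(2*j)" using j unfolding L_def by (simp add: nth_append numeral_2_eq_2)
  have j': "1 \<le> j" "j \<le> k" using j by auto
  have Nk: "N = 2*k+2" by (simp add: N_def)
  note a = part_ii_a[OF A LN Nk dL Lv S PTb j']
  note b = part_ii_b[OF A LN Nk dL Lv S PTb j']
  show "(let A' = act (transpose (is ! (2*j - 1)) (2*n - 1)) A;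
                 ct = card (comp (Jm n \<union> A) (2*n - 1)) in
              dist n A' (Jm n) = dist n (Jm n) A - {# ct #} + {# ct - 2*j, 2*j #}
              \<and> card (comp (A' \<union> Jm n) (2*n - 1)) = ct - 2*j)"
    unfolding Let_def i1 ct using a L1 by simp
  show "(let A' = act (transpose (is ! (2*j - 2)) (2*n - 1)) A;
                 ct = card (comp (Jm n \<union> A) (2*n - 1)) in
              dist n A' (Jm n) = dist n (Jm n) A
              \<and> card (comp (A' \<union> Jm n) (2*n - 1)) = ct)"
    unfolding Let_def i2 ct using b L1 by simp
qed


end
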